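(* For the influence maximization problem in the independent cascade model with full-adoption feedback, the adaptivity gap is at least $\frac{e}{e-1}$, even when the influence graph is a directed line; that is, $$\sup_{G\text{ a directed line},\,k\ge 1}\frac{\mathrm{OPT}_A(G,k)}{\mathrm{OPT}_N(G,k)}\ge \frac{e}{e-1}.$$
   Context: Independent cascade (IC) model: an influence graph is a directed graph $G=(V,E,p)$ with a probability $p_{uv}\in[0,1]$ on each edge $(u,v)\in E$. A directed line is an influence graph whose underlying graph is a directed path $v_1\to v_2\to\cdots\to v_m$. A live-edge graph (realization) $\phi$ is a random subgraph in which each edge $(u,v)$ is present ("live") independently with probability $p_{uv}$; $\mathcal{P}$ denotes this distribution. For $S\subseteq V$, $\Gamma(S,\phi)$ is the set of nodes reachable from $S$ in $\phi$, and $\sigma(S)=\mathbb{E}_{\Phi\sim\mathcal{P}}[|\Gamma(S,\Phi)|]$. Full-adoption feedback: when a node $u$ is selected as a seed, one observes the live/blocked status of all out-going edges of every node reachable from $u$ in the realization. An adaptive policy $\pi$ maps the observations so far (seeds selected and their feedback) to the next node to select; $V(\pi,\phi)$ is the seed set it selects under realization $\phi$, and $\sigma(\pi)=\mathbb{E}_{\Phi\sim\mathcal{P}}[|\Gamma(V(\pi,\Phi),\Phi)|]$. $\Pi(k)$ is the set of policies with $|V(\pi,\phi)|\le k$ for every realization $\phi$. $\mathrm{OPT}_N(G,k)=\max_{|S|\le k}\sigma(S)$ and $\mathrm{OPT}_A(G,k)=\sup_{\pi\in\Pi(k)}\sigma(\pi)$. *)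

theory Defs
  imports Complex_Main
begin

text \<open>A directed line with m nodes 0,...,m-1 and edges e -> e+1 for e < m-1.
  Edge e carries probability p e.  A realization (live-edge graph) is the set of
  live edges, a subset of {..<m-1}.\<close>

definition line_probs :: "nat \<Rightarrow> (nat \<Rightarrow> real) \<Rightarrow> bool" where
  "line_probs m p \<longleftrightarrow> (\<forall>e<m-1. 0 \<le> p e \<and> p e \<le> 1)"

definition realizations :: "nat \<Rightarrow> nat set set" where
  "realizations m = Pow {..<m-1}"

definition rprob :: "nat \<Rightarrow> (nat \<Rightarrow> real) \<Rightarrow> nat set \<Rightarrow> real" where
  "rprob m p \<phi> = (\<Prod>e\<in>{..<m-1}. if e \<in> \<phi> then p e else 1 - p e)"

definition reach :: "nat \<Rightarrow> nat set \<Rightarrow> nat set \<Rightarrow> nat set" where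
  "reach m \<phi> S = {j. j < m \<and> (\<exists>i\<in>S. i \<le> j \<and> (\<forall>e. i \<le> e \<and> e < j \<longrightarrow> e \<in> \<phi>))}"

definition spread :: "nat \<Rightarrow> (nat \<Rightarrow> real) \<Rightarrow> nat set \<Rightarrow> real" where
  "spread m p S = (\<Sum>\<phi>\<in>realizations m. rprob m p \<phi> * real (card (reach m \<phi> S)))"

definition OPT_N :: "nat \<Rightarrow> (nat \<Rightarrow> real) \<Rightarrow> nat \<Rightarrow> real" where
  "OPT_N m p k = Max (spread m p ` {S. S \<subseteq> {..<m} \<and> card S \<le> k})"

definition feedback :: "nat \<Rightarrow> nat set \<Rightarrow> nat \<Rightarrow> (nat \<times> bool) set" where
  "feedback m \<phi> u = {(e, e \<in> \<phi>) | e. e \<in> reach m \<phi> {u} \<and> e < m - 1}"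

type_synonym history = "(nat \<times> (nat \<times> bool) set) list"

text \<open>An adaptive policy maps the observations so far (seeds selected, in order,
  together with their feedback) to the next seed, or None to stop.\<close>
type_synonym policy = "history \<Rightarrow> nat option"

fun run :: "nat \<Rightarrow> policy \<Rightarrow> nat set \<Rightarrow> nat \<Rightarrow> history" where
  "run m \<pi> \<phi> 0 = []"
| "run m \<pi> \<phi> (Suc n) =
     (let h = run m \<pi> \<phi> n in
      case \<pi> h of None \<Rightarrow> h | Some u \<Rightarrow> h @ [(u, feedback m \<phi> u)])"

definition seeds :: "nat \<Rightarrow> policy \<Rightarrow> nat set \<Rightarrow> nat \<Rightarrow> nat set" where
  "seeds m \<pi> \<phi> k = fst ` set (run m \<pi> \<phi> k)"

definition adaptive_spread :: "nat \<Rightarrow> (nat \<Rightarrow> real) \<Rightarrow> policy \<Rightarrow> nat \<Rightarrow> real" where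
  "adaptive_spread m p \<pi> k =
     (\<Sum>\<phi>\<in>realizations m. rprob m p \<phi> * real (card (reach m \<phi> (seeds m \<pi> \<phi> k))))"

definition OPT_A :: "nat \<Rightarrow> (nat \<Rightarrow> real) \<Rightarrow> nat \<Rightarrow> real" where
  "OPT_A m p k = (SUP \<pi>. adaptive_spread m p \<pi> k)"

end

theory Submission
  imports Defs
begin


lemma sum_Pow_prod:
  fixes w :: "nat \<Rightarrow> bool \<Rightarrow> real"
  assumes "finite E"
  shows "(\<Sum>\<phi>\<in>Pow E. \<Prod>e\<in>E. w e (e\<in>\<phi>)) = (\<Prod>e\<in>E. w e True + w e False)"
proof -
  have "(\<Prod>e\<in>E. w e True + w e False) = (\<Sum>X\<in>Pow E. (\<Prod>x\<in>X. w x True) * (\<Prod>x\<in>E-X. w x False))"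
    by (rule prod_add[OF assms])
  also have "\<dots> = (\<Sum>\<phi>\<in>Pow E. \<Prod>e\<in>E. w e (e\<in>\<phi>))"
  proof (rule sum.cong[OF refl])
    fix X assume X: "X \<in> Pow E"
    have "(\<Prod>e\<in>E. w e (e\<in>X)) = (\<Prod>e\<in>E \<inter> X. w e (e\<in>X)) * (\<Prod>e\<in>E - X. w e (e\<in>X))"
      using assms by (rule prod.Int_Diff)
    also have "\<dots> = (\<Prod>x\<in>X. w x True) * (\<Prod>x\<in>E-X. w x False)"
      using X by (auto intro!: arg_cong2[where f="(*)"] prod.cong simp: Int_absorb1)
    finally show "(\<Prod>x\<in>X. w x True) * (\<Prod>x\<in>E-X. w x False) = (\<Prod>e\<in>E. w e (e\<in>X))" by simp
  qed
  finally show ?thesis by simp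
qed

lemma expect_prod:
  fixes f :: "bool \<Rightarrow> real"
  assumes "A \<subseteq> {..<m-1}"
  shows "(\<Sum>\<phi>\<in>realizations m. rprob m (\<lambda>_. p0) \<phi> * (\<Prod>e\<in>A. f (e\<in>\<phi>)))
         = (p0 * f True + (1-p0) * f False) ^ card A"
proof -
  let ?E = "{..<m-1}"
  define w where "w e b = (if b then p0 else 1-p0) * (if e \<in> A then f b else 1)" for e b
  have fA: "finite A" using assms finite_subset by blast
  have 1: "(\<Prod>e\<in>?E. w e (e\<in>\<phi>)) = rprob m (\<lambda>_. p0) \<phi> * (\<Prod>e\<in>A. f (e\<in>\<phi>))" for \<phi>
  proof -
    have "(\<Prod>e\<in>?E. w e (e\<in>\<phi>)) = rprob m (\<lambda>_. p0) \<phi> * (\<Prod>e\<in>?E. if e \<in> A then f (e\<in>\<phi>) else 1)"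
      unfolding w_def rprob_def prod.distrib by simp
    also have "(\<Prod>e\<in>?E. if e \<in> A then f (e\<in>\<phi>) else 1) = (\<Prod>e\<in>A. f (e\<in>\<phi>))"
      using prod.inter_restrict[of ?E "\<lambda>e. f (e\<in>\<phi>)" A] assms by (simp add: Int_absorb1)
    finally show ?thesis .
  qed
  have "(\<Sum>\<phi>\<in>realizations m. rprob m (\<lambda>_. p0) \<phi> * (\<Prod>e\<in>A. f (e\<in>\<phi>)))
       = (\<Sum>\<phi>\<in>Pow ?E. \<Prod>e\<in>?E. w e (e\<in>\<phi>))" unfolding realizations_def 1 ..
  also have "\<dots> = (\<Prod>e\<in>?E. w e True + w e False)" by (rule sum_Pow_prod) simp
  also have "\<dots> = (\<Prod>e\<in>?E. if e \<in> A then p0 * f True + (1-p0) * f False else 1)"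
    by (rule prod.cong) (auto simp: w_def)
  also have "\<dots> = (\<Prod>e\<in>A. p0 * f True + (1-p0) * f False)"
    using prod.inter_restrict[of ?E "\<lambda>e. p0 * f True + (1-p0) * f False" A, symmetric] assms
    by (simp add: Int_absorb1)
  also have "\<dots> = (p0 * f True + (1-p0) * f False) ^ card A" by simp
  finally show ?thesis .
qed

lemma rprob_sum: "(\<Sum>\<phi>\<in>realizations m. rprob m (\<lambda>_. p0) \<phi>) = 1"
  using expect_prod[of "{}" m p0 "\<lambda>_. 1"] by simp

lemma rprob_nonneg: "0 \<le> p0 \<Longrightarrow> p0 \<le> 1 \<Longrightarrow> 0 \<le> rprob m (\<lambda>_. p0) \<phi>"
  unfolding rprob_def by (intro prod_nonneg) auto

lemma prob_subset:
  assumes "A \<subseteq> {..<m-1}"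
  shows "(\<Sum>\<phi>\<in>realizations m. rprob m (\<lambda>_. p0) \<phi> * (if A \<subseteq> \<phi> then 1 else 0)) = p0 ^ card A"
proof -
  have fA: "finite A" using assms finite_subset by blast
  have "(\<Prod>e\<in>A. (if e \<in> \<phi> then 1 else 0::real)) = (if A \<subseteq> \<phi> then 1 else 0)" for \<phi>
    using fA by (auto simp: prod_zero_iff subset_iff)
  then show ?thesis using expect_prod[OF assms, of p0 "\<lambda>b. if b then 1 else 0"] by simp
qed

lemma expect_pow:
  assumes "A \<subseteq> {..<m-1}"
  shows "(\<Sum>\<phi>\<in>realizations m. rprob m (\<lambda>_. p0) \<phi> * x ^ card (A - \<phi>)) = (p0 + (1-p0)*x) ^ card A"
proof -
  have fA: "finite A" using assms finite_subset by blast
  have "(\<Prod>e\<in>A. (if e \<in> \<phi> then 1 else x)) = x ^ card (A - \<phi>)" for \<phi>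
  proof -
    have "(\<Prod>e\<in>A. (if e \<in> \<phi> then 1 else x)) = (\<Prod>e\<in>A - \<phi>. x)"
      using prod.inter_restrict[OF fA, of "\<lambda>_. x" "- \<phi>"]
      by (simp add: Diff_eq) (rule prod.cong, auto)
    then show ?thesis by simp
  qed
  then show ?thesis using expect_prod[OF assms, of p0 "\<lambda>b. if b then 1 else x"] by simp
qed



definition val :: "real \<Rightarrow> nat set \<Rightarrow> nat \<Rightarrow> real" where
  "val p S j = (if \<exists>i\<in>S. i \<le> j then p ^ (j - Max {i\<in>S. i \<le> j}) else 0)"

lemma val_sum:
  fixes p A B :: real
  assumes gap: "\<And>g. (\<Sum>d<g. p^d) \<le> A + B * real g" and B: "0 \<le> B"
  shows "finite S \<Longrightarrow> S \<subseteq> {..<m} \<Longrightarrow> (\<Sum>j<m. val p S j) \<le> real (card S) * A + B * real m"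
proof (induction "card S" arbitrary: S m rule: less_induct)
  case less
  show ?case
  proof (cases "S = {}")
    case True
    then show ?thesis using B by (simp add: val_def)
  next
    case False
    define s where "s = Max S"
    define S' where "S' = S - {s}"
    have sS: "s \<in> S" using False less.prems s_def by simp
    have sm: "s < m" using sS less.prems by auto
    have S'le: "\<And>i. i \<in> S' \<Longrightarrow> i < s" using less.prems S'_def s_def
      by (metis Diff_iff Max_ge le_neq_implies_less singletonI)
    have cS': "card S' < card S" using sS less.prems S'_def by (metis card_Diff1_less)
    have IH: "(\<Sum>j<s. val p S' j) \<le> real (card S') * A + B * real s"
      using less.hyps[OF cS', of s] less.prems S'le S'_def by auto
    have v1: "val p S j = val p S' j" if "j < s" for j
    proof -
      have "{i\<in>S. i \<le> j} = {i\<in>S'. i \<le> j}" using that S'_def by auto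
      moreover have "(\<exists>i\<in>S. i \<le> j) = (\<exists>i\<in>S'. i \<le> j)" using that S'_def by auto
      ultimately show ?thesis unfolding val_def by simp
    qed
    have v2: "val p S j = p ^ (j - s)" if "s \<le> j" for j
    proof -
      have "Max {i\<in>S. i \<le> j} = s"
        using that sS less.prems s_def by (intro Max_eqI) auto
      then show ?thesis unfolding val_def using that sS by auto
    qed
    have split: "{..<m} = {..<s} \<union> {s..<m}" using sm by auto
    have "(\<Sum>j<m. val p S j) = (\<Sum>j<s. val p S j) + (\<Sum>j\<in>{s..<m}. val p S j)"
      unfolding split by (rule sum.union_disjoint) auto
    also have "(\<Sum>j<s. val p S j) = (\<Sum>j<s. val p S' j)" using v1 by simp
    also have "(\<Sum>j\<in>{s..<m}. val p S j) = (\<Sum>j\<in>{s..<m}. p ^ (j - s))" using v2 by simp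
    also have "\<dots> = (\<Sum>d<m-s. p^d)"
    proof -
      have "(\<Sum>j\<in>{s..<m}. p ^ (j - s)) = (\<Sum>d\<in>{0..<m-s}. p ^ d)"
        using sm by (intro sum.reindex_bij_witness[of _ "\<lambda>d. d + s" "\<lambda>j. j - s"]) auto
      then show ?thesis by (simp add: atLeast0LessThan)
    qed
    also have "\<dots> \<le> A + B * real (m - s)" by (rule gap)
    finally have "(\<Sum>j<m. val p S j) \<le> real (card S') * A + B * real s + (A + B * real (m - s))"
      using IH by linarith
    also have "\<dots> = real (card S) * A + B * real m"
      using sm cS' sS less.prems S'_def by (simp add: of_nat_diff algebra_simps)
    finally show ?thesis .
  qed
qed

lemma gap_bound:
  fixes p :: real and t :: nat
  assumes p: "0 < p" "p < 1"
  defines "L \<equiv> - ln p"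
  shows "(\<Sum>d<g. p^d) \<le> (1 - p^t - p^t * L * t)/(1-p) + (p^t * L/(1-p)) * real g"
proof -
  have pe: "p ^ n = exp (- L * real n)" for n
    using p unfolding L_def by (simp add: exp_of_nat_mult mult.commute[of "ln p"])
  have "exp (- L * real g) = exp (- L * real t) * exp (- L * (real g - real t))"
    by (simp add: exp_add[symmetric] algebra_simps)
  also have "\<dots> \<ge> exp (- L * real t) * (1 + (- L * (real g - real t)))"
    by (intro mult_left_mono exp_ge_add_one_self) auto
  finally have key: "p^g \<ge> p^t * (1 - L * (real g - real t))" unfolding pe by (simp add: algebra_simps)
  have "(\<Sum>d<g. p^d) = (1 - p^g)/(1-p)" using p by (simp add: geometric_sum[of p g] field_simps)
  also have "\<dots> \<le> (1 - p^t * (1 - L * (real g - real t)))/(1-p)"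
    using p key by (intro divide_right_mono) auto
  also have "\<dots> = (1 - p^t - p^t * L * t)/(1-p) + (p^t * L/(1-p)) * real g"
  proof -
    have "1 - p^t * (1 - L * (real g - real t)) = (1 - p^t - p^t * L * t) + (p^t * L) * real g"
      by (simp add: algebra_simps)
    then show ?thesis by (metis add_divide_distrib times_divide_eq_left)
  qed
  finally show ?thesis .
qed

lemma A_nonneg:
  fixes p :: real and t :: nat
  assumes p: "0 < p" "p < 1"
  shows "0 \<le> (1 - p^t - p^t * (- ln p) * t)/(1-p)"
proof -
  let ?L = "- ln p"
  have pe: "p ^ t = exp (- ?L * real t)"
    using p by (simp add: exp_of_nat_mult mult.commute[of "ln p"])
  have "1 + ?L * t \<le> exp (?L * t)" by (rule exp_ge_add_one_self)
  then have "exp (- ?L * real t) * (1 + ?L * t) \<le> exp (- ?L * real t) * exp (?L * t)"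
    by (intro mult_left_mono) auto
  also have "\<dots> = 1" by (simp add: exp_add[symmetric])
  finally have "p^t * (1 + ?L * t) \<le> 1" unfolding pe .
  then show ?thesis using p by (intro divide_nonneg_pos) (auto simp: algebra_simps)
qed



lemma card_reach_sum: "real (card (reach m \<phi> S)) = (\<Sum>j<m. if j \<in> reach m \<phi> S then 1 else 0)"
proof -
  have "reach m \<phi> S \<subseteq> {..<m}" unfolding reach_def by auto
  then have "reach m \<phi> S = {..<m} \<inter> reach m \<phi> S" by auto
  then have "real (card (reach m \<phi> S)) = (\<Sum>j\<in>{..<m} \<inter> reach m \<phi> S. 1)" by simp
  also have "\<dots> = (\<Sum>j<m. if j \<in> reach m \<phi> S then 1 else 0)"
    by (rule sum.inter_restrict) simp
  finally show ?thesis .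
qed

lemma swap_expect:
  "(\<Sum>\<phi>\<in>realizations m. rprob m p \<phi> * (\<Sum>j<n. f j \<phi>)) = (\<Sum>j<n. \<Sum>\<phi>\<in>realizations m. rprob m p \<phi> * f j \<phi>)"
  by (simp add: sum_distrib_left sum.swap[of _ "{..<n}"])

lemma node_prob:
  assumes p: "0 \<le> p0" "p0 \<le> 1" and j: "j < m"
  shows "(\<Sum>\<phi>\<in>realizations m. rprob m (\<lambda>_. p0) \<phi> * (if j \<in> reach m \<phi> S then 1 else 0)) \<le> val p0 S j"
proof (cases "\<exists>i\<in>S. i \<le> j")
  case False
  then have "j \<notin> reach m \<phi> S" for \<phi> unfolding reach_def by auto
  then show ?thesis using False by (simp add: val_def)
next
  case True
  define s where "s = Max {i\<in>S. i \<le> j}"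
  have fin: "finite {i\<in>S. i \<le> j}" by (rule finite_subset[of _ "{..j}"]) auto
  have "{i\<in>S. i \<le> j} \<noteq> {}" using True by auto
  then have "s \<in> {i\<in>S. i \<le> j}" using fin s_def Max_in by blast
  then have sj: "s \<le> j" by simp
  have sub: "{s..<j} \<subseteq> {..<m-1}" using j by auto
  have "(if j \<in> reach m \<phi> S then 1 else 0) \<le> (if {s..<j} \<subseteq> \<phi> then 1 else (0::real))" for \<phi>
  proof -
    have "{s..<j} \<subseteq> \<phi>" if jr: "j \<in> reach m \<phi> S"
    proof -
      from jr obtain i where i: "i \<in> S" "i \<le> j" "\<forall>e. i \<le> e \<and> e < j \<longrightarrow> e \<in> \<phi>"
        unfolding reach_def by blast
      have "i \<le> s" using i fin s_def by (simp add: Max_ge)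
      then show ?thesis using i by auto
    qed
    then show ?thesis by auto
  qed
  then have "(\<Sum>\<phi>\<in>realizations m. rprob m (\<lambda>_. p0) \<phi> * (if j \<in> reach m \<phi> S then 1 else 0))
      \<le> (\<Sum>\<phi>\<in>realizations m. rprob m (\<lambda>_. p0) \<phi> * (if {s..<j} \<subseteq> \<phi> then 1 else 0))"
    by (intro sum_mono mult_left_mono rprob_nonneg p)
  also have "\<dots> = p0 ^ (j - s)" using prob_subset[OF sub] by simp
  finally show ?thesis using True s_def by (simp add: val_def)
qed

lemma spread_le:
  assumes p: "0 \<le> p0" "p0 \<le> 1"
  shows "spread m (\<lambda>_. p0) S \<le> (\<Sum>j<m. val p0 S j)"
proof -
  have "spread m (\<lambda>_. p0) S = (\<Sum>j<m. \<Sum>\<phi>\<in>realizations m. rprob m (\<lambda>_. p0) \<phi> * (if j \<in> reach m \<phi> S then 1 else 0))"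
    unfolding spread_def card_reach_sum swap_expect ..
  also have "\<dots> \<le> (\<Sum>j<m. val p0 S j)"
    by (intro sum_mono node_prob p) auto
  finally show ?thesis .
qed

lemma OPT_N_le:
  fixes p0 :: real and t k :: nat
  assumes p: "0 < p0" "p0 < 1"
  shows "OPT_N (k*t) (\<lambda>_. p0) k \<le> real k * (1 - p0^t) / (1 - p0)"
proof -
  define L where "L = - ln p0"
  define A where "A = (1 - p0^t - p0^t * L * t)/(1-p0)"
  define B where "B = p0^t * L/(1-p0)"
  have A0: "0 \<le> A" unfolding A_def L_def using A_nonneg[OF p] .
  have L0: "0 \<le> L" unfolding L_def using p by simp
  have B0: "0 \<le> B" unfolding B_def using p L0 by simp
  have gap: "(\<Sum>d<g. p0^d) \<le> A + B * real g" for g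
    unfolding A_def B_def L_def using gap_bound[OF p, of g t] by simp
  let ?F = "{S. S \<subseteq> {..<k*t} \<and> card S \<le> k}"
  have finF: "finite ?F" by (rule finite_subset[of _ "Pow {..<k*t}"]) auto
  have ne: "{} \<in> ?F" by simp
  have each: "spread (k*t) (\<lambda>_. p0) S \<le> real k * (1 - p0^t) / (1 - p0)" if "S \<in> ?F" for S
  proof -
    have fS: "finite S" using that finite_subset by blast
    have "spread (k*t) (\<lambda>_. p0) S \<le> (\<Sum>j<k*t. val p0 S j)" using spread_le p by simp
    also have "\<dots> \<le> real (card S) * A + B * real (k*t)"
      using val_sum[OF gap B0 fS, of "k*t"] that by simp
    also have "\<dots> \<le> real k * A + B * real (k*t)"
      using that A0 by (intro add_right_mono mult_right_mono) auto
    also have "\<dots> = real k * (1 - p0^t) / (1 - p0)"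
    proof -
      have "real k * A + B * real (k*t) = real k * (A + B * real t)" by (simp add: algebra_simps)
      moreover have "A + B * real t = (1 - p0^t) / (1 - p0)"
        unfolding A_def B_def by (simp add: diff_divide_distrib add_divide_distrib)
      ultimately show ?thesis by simp
    qed
    finally show ?thesis .
  qed
  show ?thesis unfolding OPT_N_def
    using finF ne each by (intro Max.boundedI) auto
qed

lemma OPT_N_pos:
  assumes p: "0 \<le> p0" "p0 \<le> 1" and m: "1 \<le> m" and k: "1 \<le> k"
  shows "1 \<le> OPT_N m (\<lambda>_. p0) k"
proof -
  let ?F = "{S. S \<subseteq> {..<m} \<and> card S \<le> k}"
  have finF: "finite ?F" by (rule finite_subset[of _ "Pow {..<m}"]) auto
  have inF: "{0} \<in> ?F" using m k by auto
  have "1 \<le> spread m (\<lambda>_. p0) {0}"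
  proof -
    have "1 \<le> real (card (reach m \<phi> {0}))" if "0 \<in> reach m \<phi> {0}" for \<phi>
    proof -
      have "finite (reach m \<phi> {0})" by (rule finite_subset[of _ "{..<m}"]) (auto simp: reach_def)
      then have "0 < card (reach m \<phi> {0})" using that card_gt_0_iff by blast
      then show ?thesis by simp
    qed
    moreover have "0 \<in> reach m \<phi> {0}" for \<phi> using m unfolding reach_def by auto
    ultimately have "(\<Sum>\<phi>\<in>realizations m. rprob m (\<lambda>_. p0) \<phi> * 1) \<le> spread m (\<lambda>_. p0) {0}"
      unfolding spread_def by (intro sum_mono mult_left_mono rprob_nonneg p) auto
    then show ?thesis using rprob_sum by simp
  qed
  also have "\<dots> \<le> OPT_N m (\<lambda>_. p0) k" unfolding OPT_N_def
    using finF inF by (intro Max_ge) auto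
  finally show ?thesis .
qed



definition covered :: "history \<Rightarrow> nat set" where
  "covered h = fst ` set h \<union> {Suc e | e. \<exists>u fb. (u,fb) \<in> set h \<and> (e,True) \<in> fb}"

definition gpol :: policy where
  "gpol h = Some (LEAST j. j \<notin> covered h)"

definition Bl :: "nat set \<Rightarrow> nat \<Rightarrow> nat" where
  "Bl \<phi> x = card ({..<x} - \<phi>)"

lemma covered_snoc:
  "covered (h @ [(x,fb)]) = covered h \<union> {x} \<union> {Suc e | e. (e,True) \<in> fb}"
  unfolding covered_def by auto

lemma reach_mono: "S \<subseteq> S' \<Longrightarrow> reach m \<phi> S \<subseteq> reach m \<phi> S'"
  unfolding reach_def by blast

lemma Bl_mono: "x \<le> y \<Longrightarrow> Bl \<phi> x \<le> Bl \<phi> y"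
  unfolding Bl_def by (intro card_mono) auto

declare run.simps(2)[simp del]

lemma run_inv:
  "\<exists>x. covered (run m gpol \<phi> n) = {..<x} \<and> (m \<le> x \<or> n \<le> Bl \<phi> x) \<and>
       (\<forall>j. j < x \<and> j < m \<longrightarrow> j \<in> reach m \<phi> (fst ` set (run m gpol \<phi> n)))"
proof (induction n)
  case 0
  show ?case by (rule exI[of _ 0]) (simp add: covered_def)
next
  case (Suc n)
  let ?h = "run m gpol \<phi> n"
  from Suc obtain x where cov: "covered ?h = {..<x}" and cond: "m \<le> x \<or> n \<le> Bl \<phi> x"
    and rch: "\<forall>j. j < x \<and> j < m \<longrightarrow> j \<in> reach m \<phi> (fst ` set ?h)" by blast
  have "(LEAST j. j \<notin> covered ?h) = x" unfolding cov by (rule Least_equality) auto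
  then have pol: "gpol ?h = Some x" unfolding gpol_def by simp
  define fb where "fb = feedback m \<phi> x"
  have run: "run m gpol \<phi> (Suc n) = ?h @ [(x, fb)]"
    by (simp only: run.simps(2) Let_def pol option.simps fb_def)
  have seeds: "fst ` set (run m gpol \<phi> (Suc n)) = insert x (fst ` set ?h)" unfolding run by auto
  have rch': "j \<in> reach m \<phi> (fst ` set (run m gpol \<phi> (Suc n)))"
    if "j < x" "j < m" for j
    using rch that reach_mono[of "fst ` set ?h" "fst ` set (run m gpol \<phi> (Suc n))" m \<phi>] seeds by blast
  show ?case
  proof (cases "m \<le> x")
    case True
    have "reach m \<phi> {x} = {}" using True unfolding reach_def by auto
    then have "fb = {}" unfolding fb_def feedback_def by auto
    then have c': "covered (run m gpol \<phi> (Suc n)) = {..<Suc x}"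
      unfolding run covered_snoc cov by auto
    show ?thesis
      by (rule exI[of _ "Suc x"]) (use c' True rch' in auto)
  next
    case False
    then have xm: "x < m" by simp
    define y where "y = (LEAST e. x \<le> e \<and> (e \<notin> \<phi> \<or> e = m-1))"
    have ex: "x \<le> m-1 \<and> (m-1 \<notin> \<phi> \<or> m-1 = m-1)" using xm by simp
    have y1: "x \<le> y \<and> (y \<notin> \<phi> \<or> y = m-1)" unfolding y_def by (rule LeastI[of "\<lambda>e. x \<le> e \<and> (e \<notin> \<phi> \<or> e = m-1)", OF ex])
    have y2: "y \<le> m-1" unfolding y_def by (rule Least_le[of "\<lambda>e. x \<le> e \<and> (e \<notin> \<phi> \<or> e = m-1)", OF ex])
    have y3: "e \<in> \<phi> \<and> e \<noteq> m-1" if "x \<le> e" "e < y" for e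
      using not_less_Least[of e "\<lambda>e. x \<le> e \<and> (e \<notin> \<phi> \<or> e = m-1)"] that unfolding y_def[symmetric]
      by auto
    have R: "reach m \<phi> {x} = {x..y}"
    proof (intro set_eqI iffI)
      fix j assume "j \<in> reach m \<phi> {x}"
      then have j: "j < m" "x \<le> j" "\<forall>e. x \<le> e \<and> e < j \<longrightarrow> e \<in> \<phi>" unfolding reach_def by auto
      show "j \<in> {x..y}"
      proof (rule ccontr)
        assume "j \<notin> {x..y}"
        then have "y < j" using j by auto
        then have "y \<in> \<phi>" using j y1 by auto
        then have "y = m-1" using y1 by auto
        then show False using \<open>y < j\<close> j by auto
      qed
    next
      fix j assume "j \<in> {x..y}"
      then show "j \<in> reach m \<phi> {x}" unfolding reach_def using y2 y3 xm by fastforce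
    qed
    have T: "{Suc e | e. (e,True) \<in> fb} = {Suc x..y}"
    proof -
      have FB: "fb = (\<lambda>e. (e, e \<in> \<phi>)) ` {e. e \<in> {x..y} \<and> e < m - 1}"
        unfolding fb_def feedback_def R by blast
      have iff: "(e,True) \<in> fb \<longleftrightarrow> x \<le> e \<and> e < y" for e
      proof
        assume "(e,True) \<in> fb"
        then have "e \<in> {x..y}" "e < m-1" "e \<in> \<phi>" unfolding FB by auto
        then show "x \<le> e \<and> e < y" using y1 by (cases "e = y") auto
      next
        assume a: "x \<le> e \<and> e < y"
        then have "e \<in> \<phi>" "e < m-1" using y3[of e] y2 by auto
        moreover have "e \<in> {x..y}" using a by auto
        ultimately have "(e, e \<in> \<phi>) \<in> fb" unfolding FB by blast
        then show "(e,True) \<in> fb" using \<open>e \<in> \<phi>\<close> by simp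
      qed
      have "{e. (e,True) \<in> fb} = {x..<y}" by (rule set_eqI) (simp add: iff)
      then have "{Suc e | e. (e,True) \<in> fb} = Suc ` {x..<y}" by blast
      also have "\<dots> = {Suc x..y}" by (simp add: image_Suc_atLeastLessThan atLeastLessThanSuc_atLeastAtMost)
      finally show ?thesis .
    qed
    have c': "covered (run m gpol \<phi> (Suc n)) = {..<Suc y}"
    proof -
      have "covered (run m gpol \<phi> (Suc n)) = {..<x} \<union> {x} \<union> {Suc x..y}"
        unfolding run covered_snoc cov T ..
      also have "\<dots> = {..<Suc y}" using y1 by auto
      finally show ?thesis .
    qed
    have cond': "m \<le> Suc y \<or> Suc n \<le> Bl \<phi> (Suc y)"
    proof (cases "y = m-1")
      case True then show ?thesis using xm by simp
    next
      case False
      then have yn: "y \<notin> \<phi>" using y1 by simp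
      have nB: "n \<le> Bl \<phi> x" using cond xm by simp
      have "insert y ({..<x} - \<phi>) \<subseteq> {..<Suc y} - \<phi>" using y1 yn by auto
      then have "card (insert y ({..<x} - \<phi>)) \<le> Bl \<phi> (Suc y)"
        unfolding Bl_def by (intro card_mono) auto
      moreover have "card (insert y ({..<x} - \<phi>)) = Suc (Bl \<phi> x)"
        unfolding Bl_def using y1 by (subst card_insert_disjoint) auto
      ultimately show ?thesis using nB by simp
    qed
    have rch'': "j \<in> reach m \<phi> (fst ` set (run m gpol \<phi> (Suc n)))"
      if "j < Suc y" "j < m" for j
    proof (cases "j < x")
      case True then show ?thesis using rch' that by blast
    next
      case False
      then have "j \<in> reach m \<phi> {x}" unfolding R using that by auto
      then show ?thesis using reach_mono[of "{x}" "fst ` set (run m gpol \<phi> (Suc n))"] seeds by blast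
    qed
    show ?thesis by (rule exI[of _ "Suc y"]) (use c' cond' rch'' in blast)
  qed
qed

lemma adaptive_cover:
  "{j. j < m \<and> Bl \<phi> j < k} \<subseteq> reach m \<phi> (seeds m gpol \<phi> k)"
proof
  fix j assume j: "j \<in> {j. j < m \<and> Bl \<phi> j < k}"
  obtain x where cond: "m \<le> x \<or> k \<le> Bl \<phi> x"
    and rch: "\<forall>j. j < x \<and> j < m \<longrightarrow> j \<in> reach m \<phi> (fst ` set (run m gpol \<phi> k))"
    using run_inv[of m \<phi> k] by blast
  have "j < x"
  proof (rule ccontr)
    assume "\<not> j < x"
    then have "Bl \<phi> x \<le> Bl \<phi> j" by (intro Bl_mono) simp
    then show False using cond j \<open>\<not> j < x\<close> by auto
  qed
  then show "j \<in> reach m \<phi> (seeds m gpol \<phi> k)" using rch j unfolding seeds_def by blast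
qed



lemma adaptive_lower:
  assumes p: "0 \<le> p0" "p0 \<le> 1" and x0: "1 \<le> x0"
  shows "real m - real m * (p0 + (1-p0)*x0)^m / x0^k \<le> adaptive_spread m (\<lambda>_. p0) gpol k"
proof -
  let ?b = "p0 + (1-p0)*x0"
  have "(1-p0)*1 \<le> (1-p0)*x0" using p x0 by (intro mult_left_mono) auto
  then have b1: "1 \<le> ?b" by simp
  have x0p: "0 < x0^k" using x0 by simp
  have ind: "(1 - x0 ^ Bl \<phi> j / x0^k) \<le> (if j \<in> reach m \<phi> (seeds m gpol \<phi> k) then 1 else 0)"
    if "j < m" for \<phi> j
  proof (cases "Bl \<phi> j < k")
    case True
    then have "j \<in> reach m \<phi> (seeds m gpol \<phi> k)" using adaptive_cover[of m \<phi> k] that by blast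
    then show ?thesis using x0 by simp
  next
    case False
    then have "x0^k \<le> x0 ^ Bl \<phi> j" using x0 by (intro power_increasing) auto
    then have "1 \<le> x0 ^ Bl \<phi> j / x0^k" using x0p by simp
    then show ?thesis by simp
  qed
  have "(\<Sum>j<m. (1 - ?b^m / x0^k)) \<le> (\<Sum>j<m. (1 - ?b^j / x0^k))"
  proof (intro sum_mono)
    fix j assume "j \<in> {..<m}"
    then have "?b^j \<le> ?b^m" using b1 by (intro power_increasing) auto
    then show "1 - ?b^m / x0^k \<le> 1 - ?b^j / x0^k" using x0p by (intro diff_left_mono divide_right_mono) auto
  qed
  also have "\<dots> = (\<Sum>j<m. \<Sum>\<phi>\<in>realizations m. rprob m (\<lambda>_. p0) \<phi> * (1 - x0 ^ Bl \<phi> j / x0^k))"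
  proof (intro sum.cong refl)
    fix j assume j: "j \<in> {..<m}"
    have sub: "{..<j} \<subseteq> {..<m-1}" using j by auto
    have "(\<Sum>\<phi>\<in>realizations m. rprob m (\<lambda>_. p0) \<phi> * (1 - x0 ^ Bl \<phi> j / x0^k))
       = (\<Sum>\<phi>\<in>realizations m. rprob m (\<lambda>_. p0) \<phi>)
         - (\<Sum>\<phi>\<in>realizations m. rprob m (\<lambda>_. p0) \<phi> * x0 ^ card ({..<j} - \<phi>)) / x0^k"
    proof -
      have "rprob m (\<lambda>_. p0) \<phi> * (1 - x0 ^ Bl \<phi> j / x0^k) = rprob m (\<lambda>_. p0) \<phi> - rprob m (\<lambda>_. p0) \<phi> * x0 ^ card ({..<j} - \<phi>) / x0^k" for \<phi>
        unfolding Bl_def by (simp add: right_diff_distrib)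
      then show ?thesis by (simp only: sum_subtractf sum_divide_distrib)
    qed
    also have "\<dots> = 1 - ?b^j / x0^k" using expect_pow[OF sub, of p0 x0] rprob_sum by simp
    finally show "1 - ?b^j / x0^k = (\<Sum>\<phi>\<in>realizations m. rprob m (\<lambda>_. p0) \<phi> * (1 - x0 ^ Bl \<phi> j / x0^k))" by simp
  qed
  also have "\<dots> = (\<Sum>\<phi>\<in>realizations m. rprob m (\<lambda>_. p0) \<phi> * (\<Sum>j<m. (1 - x0 ^ Bl \<phi> j / x0^k)))"
    by (rule swap_expect[symmetric])
  also have "\<dots> \<le> (\<Sum>\<phi>\<in>realizations m. rprob m (\<lambda>_. p0) \<phi> * (\<Sum>j<m. if j \<in> reach m \<phi> (seeds m gpol \<phi> k) then 1 else 0))"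
    by (intro sum_mono mult_left_mono rprob_nonneg p) (rule ind, simp)
  also have "\<dots> = adaptive_spread m (\<lambda>_. p0) gpol k"
    unfolding adaptive_spread_def card_reach_sum ..
  finally show ?thesis by (simp add: right_diff_distrib)
qed

lemma OPT_A_ge:
  assumes p: "0 \<le> p0" "p0 \<le> 1"
  shows "adaptive_spread m (\<lambda>_. p0) \<pi> k \<le> OPT_A m (\<lambda>_. p0) k"
proof -
  have bd: "adaptive_spread m (\<lambda>_. p0) \<pi>' k \<le> real m" for \<pi>'
  proof -
    have "card (reach m \<phi> S) \<le> m" for \<phi> S
      using card_mono[of "{..<m}" "reach m \<phi> S"] unfolding reach_def by auto
    then have "adaptive_spread m (\<lambda>_. p0) \<pi>' k \<le> (\<Sum>\<phi>\<in>realizations m. rprob m (\<lambda>_. p0) \<phi> * real m)"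
      unfolding adaptive_spread_def by (intro sum_mono mult_left_mono rprob_nonneg p) auto
    also have "\<dots> = real m" using rprob_sum by (simp add: sum_distrib_right[symmetric])
    finally show ?thesis .
  qed
  show ?thesis unfolding OPT_A_def
    by (rule cSUP_upper) (use bd in \<open>auto intro!: bdd_aboveI2\<close>)
qed



lemma rho_lt1:
  fixes a :: real assumes a: "0 < a" "a < 1"
  shows "a * exp (1-a) < 1"
proof -
  define y where "y = 1 - a"
  have y: "0 < y" "y < 1" using a y_def by auto
  have "1 - y/2 \<le> exp (-y/2)" using exp_ge_add_one_self[of "-y/2"] by simp
  moreover have "0 \<le> 1 - y/2" using y by simp
  ultimately have "(1 - y/2)^2 \<le> exp (-y/2) ^ 2" by (intro power_mono) auto
  also have "exp (-y/2) ^ 2 = exp (-y)" by (simp add: power2_eq_square exp_add[symmetric])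
  finally have e1: "1 - y + y^2/4 \<le> exp (-y)" by (simp add: power2_eq_square algebra_simps)
  have e2: "0 < y^2/4" using y by simp
  have "a < exp (-y)" using e1 e2 y_def by linarith
  then have "a * exp y < exp (-y) * exp y" by (intro mult_strict_right_mono) auto
  also have "\<dots> = 1" by (simp add: exp_add[symmetric])
  finally show ?thesis using y_def by simp
qed

lemma instance_bound:
  fixes a :: real and n :: nat
  assumes a: "0 < a" "a < 1" and n: "1 \<le> n"
  shows "a * (1 - (a * exp (1-a))^n) / (1 - (1 - a/n)^n)
         \<le> OPT_A (n*n) (\<lambda>_. 1 - a/n) n / OPT_N (n*n) (\<lambda>_. 1 - a/n) n"
proof -
  define p0 where "p0 = 1 - a/n"
  define m where "m = n*n"
  define \<rho> where "\<rho> = a * exp (1-a)"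
  have nr: "1 \<le> real n" using n by simp
  have an: "0 < a/n" "a/n < 1" using a nr by (auto simp: divide_less_eq)
  have p0: "0 < p0" "p0 < 1" using an p0_def by auto
  have x0: "1 \<le> 1/a" using a by simp
  define b where "b = p0 + (1-p0)*(1/a)"
  have b: "b = 1 + (1-a)/n" unfolding b_def p0_def using a nr by (simp add: field_simps)
  have b0: "0 \<le> b" unfolding b using a by simp
  have "b \<le> exp ((1-a)/n)" unfolding b using exp_ge_add_one_self[of "(1-a)/n"] by simp
  then have "b^m \<le> exp ((1-a)/n) ^ m" using b0 by (intro power_mono) auto
  also have "exp ((1-a)/n) ^ m = exp (1-a) ^ n"
  proof -
    have "exp ((1-a)/n) ^ m = exp (real m * ((1-a)/n))" by (rule exp_of_nat_mult[symmetric])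
    also have "real m * ((1-a)/n) = real n * (1-a)" unfolding m_def using nr by simp
    also have "exp (real n * (1-a)) = exp (1-a) ^ n" by (simp add: exp_of_nat_mult)
    finally show ?thesis .
  qed
  finally have bm: "b^m \<le> exp (1-a) ^ n" .
  have rho0: "0 \<le> \<rho>" "\<rho> < 1" using rho_lt1[OF a] a unfolding \<rho>_def by auto
  have rhon: "\<rho>^n \<le> 1" using rho0 by (simp add: power_le_one)
  have "real m * (1 - \<rho>^n) \<le> real m - real m * b^m / (1/a)^n"
  proof -
    have "b^m / (1/a)^n = b^m * a^n" using a by (simp add: power_one_over)
    also have "\<dots> \<le> exp (1-a) ^ n * a^n" using bm a by (intro mult_right_mono) auto
    also have "\<dots> = \<rho>^n" unfolding \<rho>_def by (simp add: power_mult_distrib)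
    finally have "b^m / (1/a)^n \<le> \<rho>^n" .
    then have "real m * (b^m / (1/a)^n) \<le> real m * \<rho>^n" by (intro mult_left_mono) auto
    then show ?thesis by (simp add: right_diff_distrib)
  qed
  also have "\<dots> \<le> OPT_A m (\<lambda>_. p0) n"
    using adaptive_lower[of p0 "1/a" m n] OPT_A_ge[of p0 m gpol n] p0 x0 unfolding b_def by simp
  finally have A: "real m * (1 - \<rho>^n) \<le> OPT_A m (\<lambda>_. p0) n" .
  have N: "OPT_N m (\<lambda>_. p0) n \<le> real n * (1 - p0^n) / (1 - p0)"
    unfolding m_def using OPT_N_le[OF p0, of n n] .
  have Npos: "1 \<le> OPT_N m (\<lambda>_. p0) n" using OPT_N_pos[of p0 m n] p0 n unfolding m_def by simp
  have "p0^n < 1" using p0 n by (simp add: power_less_one_iff)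
  then have Ypos: "0 < real n * (1 - p0^n) / (1 - p0)" using p0 nr by simp
  have X0: "0 \<le> real m * (1 - \<rho>^n)" using rhon by simp
  have "real m * (1 - \<rho>^n) / (real n * (1 - p0^n) / (1 - p0))
        \<le> real m * (1 - \<rho>^n) / OPT_N m (\<lambda>_. p0) n"
  proof (rule divide_left_mono[OF N X0])
    show "0 < real n * (1 - p0^n) / (1 - p0) * OPT_N m (\<lambda>_. p0) n"
      using Ypos Npos by (intro mult_pos_pos) auto
  qed
  also have "\<dots> \<le> OPT_A m (\<lambda>_. p0) n / OPT_N m (\<lambda>_. p0) n"
    using A Npos by (intro divide_right_mono) auto
  finally have main: "real m * (1 - \<rho>^n) / (real n * (1 - p0^n) / (1 - p0))
        \<le> OPT_A m (\<lambda>_. p0) n / OPT_N m (\<lambda>_. p0) n" .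
  have "real m * (1 - \<rho>^n) / (real n * (1 - p0^n) / (1 - p0)) = a * (1 - \<rho>^n) / (1 - p0^n)"
    unfolding m_def p0_def using nr \<open>p0^n < 1\<close> a unfolding p0_def by (simp add: field_simps)
  then show ?thesis using main unfolding m_def p0_def \<rho>_def by simp
qed



theorem theorem4:
  fixes c :: real
  assumes "c < exp 1 / (exp 1 - 1)"
  shows "\<exists>m p k. m \<ge> 1 \<and> k \<ge> 1 \<and> line_probs m p \<and> OPT_A m p k / OPT_N m p k > c"
proof -
  have e: "exp 1 / (exp 1 - 1) = 1 / (1 - exp (-1::real))"
  proof -
    have "exp (-1::real) = 1 / exp 1" by (simp add: exp_minus field_simps)
    moreover have "exp (1::real) > 1" by simp
    ultimately show ?thesis by (simp add: field_simps)
  qed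
  have ne: "1 - exp (-1::real) \<noteq> 0" by simp
  have lim: "((\<lambda>a. a / (1 - exp (-a))) \<longlongrightarrow> 1 / (1 - exp (-1::real))) (at_left 1)"
    using ne by (intro tendsto_intros) auto
  have ev: "eventually (\<lambda>a. c < a / (1 - exp (-a)) \<and> a \<in> {0<..<1}) (at_left (1::real))"
    using order_tendstoD(1)[OF lim, of c] assms e eventually_at_left_real[of 0 "1::real"]
    by (auto elim: eventually_elim2)
  obtain a where a: "c < a / (1 - exp (-a))" "0 < a" "a < 1"
    using eventually_happens[OF ev] by auto
  define \<rho> where "\<rho> = a * exp (1-a)"
  have rho: "norm \<rho> < 1" using rho_lt1[of a] a unfolding \<rho>_def by auto
  have ne2: "1 - exp (-a) \<noteq> 0" using a by simp
  have l1: "(\<lambda>n. (1 + (-a) / real n) ^ n) \<longlonglongrightarrow> exp (-a)" by (rule tendsto_exp_limit_sequentially)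
  have l1': "(\<lambda>n. (1 - a / real n) ^ n) \<longlonglongrightarrow> exp (-a)" using l1 by simp
  have lim2: "(\<lambda>n. a * (1 - \<rho>^n) / (1 - (1 - a / real n)^n)) \<longlonglongrightarrow> a * (1 - 0) / (1 - exp (-a))"
    using ne2 by (intro tendsto_intros l1' rho)
  have ev2: "eventually (\<lambda>n. c < a * (1 - \<rho>^n) / (1 - (1 - a / real n)^n) \<and> 1 \<le> n) sequentially"
  proof -
    have "eventually (\<lambda>n. c < a * (1 - \<rho>^n) / (1 - (1 - a / real n)^n)) sequentially"
      using order_tendstoD(1)[OF lim2, of c] a by simp
    then show ?thesis using eventually_ge_at_top[of "1::nat"] by (rule eventually_conj)
  qed
  then obtain n where n: "c < a * (1 - \<rho>^n) / (1 - (1 - a / real n)^n)" "1 \<le> n"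
    using eventually_happens[OF ev2] by auto
  have nr: "1 \<le> real n" using n by simp
  have an: "a / real n \<le> 1" using a nr by (simp add: divide_le_eq)
  have lp: "line_probs (n*n) (\<lambda>_. 1 - a / real n)"
    unfolding line_probs_def using an a nr by auto
  have "c < OPT_A (n*n) (\<lambda>_. 1 - a/n) n / OPT_N (n*n) (\<lambda>_. 1 - a/n) n"
    using n(1) instance_bound[OF a(2,3) n(2)] unfolding \<rho>_def by linarith
  moreover have "1 \<le> n*n" using n by simp
  ultimately show ?thesis using lp n(2) by blast
qed

end
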